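(* Assume $G\in\mathcal{RH}_\infty$ and that $v$ is measurable, so the controller has the form $u=K\begin{bmatrix} y\\ v\end{bmatrix}$. Then $K$ is an output-rectifying retrofit controller if and only if $$K=\hat K R,\qquad R:=\begin{bmatrix} I & -G_{yv}\end{bmatrix},$$ where $\hat K$ is a stabilizing controller for $G_{yu}$. (That is, $K$ first forms the rectified output $\hat y=y-G_{yv}v$ and then applies $u=\hat K\hat y$.)
   Context: A subsystem is a proper real rational transfer matrix $G$ with inputs $(v,d,u)$ (interaction input, disturbance input, control input) and outputs $(w,z,y)$ (interaction output, evaluation output, measurement output), with blocks $G_{ab}$ denoting the transfer matrix from input $b$ to output $a$. $\mathcal{RH}_\infty$ is the set of stable, proper, real rational transfer matrices. For transfer matrices $H$ and $C$, $C$ is a stabilizing controller for $H$ if the positive feedback loop $y=Hu$, $u=Cy$ is internally stable (for $H\in\mathcal{RH}_\infty$ these are exactly $C=(I+\hat QH)^{-1}\hat Q$, $\hat Q\in\mathcal{RH}_\infty$). When $v$ is measurable, the measurement output is augmented to $(y,v)$ with $G_{(y,v)v}:=\begin{bmatrix} G_{yv}\\ I\end{bmatrix}$, $G_{(y,v)u}:=\begin{bmatrix} G_{yu}\\ 0\end{bmatrix}$. A controller $u=K\begin{bmatrix} y\\ v\end{bmatrix}$ is an output-rectifying retrofit controller if $K=(I+QG_{(y,v)u})^{-1}Q$ for some $Q\in\mathcal{RH}_\infty$ with $Q\,G_{(y,v)v}=0$. *)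

theory Defs
  imports "HOL-Computational_Algebra.Polynomial" "HOL-Computational_Algebra.Fraction_Field"
    Complex_Main "Jordan_Normal_Form.Matrix"
begin

text \<open>Scalars: real rational functions in the Laplace variable s, i.e. the fraction
  field of real polynomials.  Transfer matrices are matrices over this field.\<close>

type_synonym tf = "real poly fract"

definition RH_inf :: "tf \<Rightarrow> bool" where
  "RH_inf x \<longleftrightarrow> (\<exists>p q. q \<noteq> 0 \<and> x = Fract p q \<and> degree p \<le> degree q \<and>
      (\<forall>z::complex. poly (map_poly complex_of_real q) z = 0 \<longrightarrow> Re z < 0))"

definition RH_inf_mat :: "tf mat \<Rightarrow> bool" where
  "RH_inf_mat A \<longleftrightarrow> (\<forall>i < dim_row A. \<forall>j < dim_col A. RH_inf (A $$ (i, j)))"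

definition is_inverse_mat :: "tf mat \<Rightarrow> tf mat \<Rightarrow> bool" where
  "is_inverse_mat A B \<longleftrightarrow> inverts_mat A B \<and> inverts_mat B A"

text \<open>Internal stability of the positive feedback loop u = C y + e1, y = H u + e2,
  with H of size ny x nu and C of size nu x ny: the loop matrix
  [[I, -C], [-H, I]] is invertible (well-posedness) and its inverse, i.e. the
  closed-loop transfer matrix from (e1,e2) to (u,y), lies in RH-infinity.\<close>
definition stabilizing_controller :: "nat \<Rightarrow> nat \<Rightarrow> tf mat \<Rightarrow> tf mat \<Rightarrow> bool" where
  "stabilizing_controller ny nu H C \<longleftrightarrow>
     H \<in> carrier_mat ny nu \<and> C \<in> carrier_mat nu ny \<and>
     (\<exists>Minv. is_inverse_mat (four_block_mat (1\<^sub>m nu) (- C) (- H) (1\<^sub>m ny)) Minv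
            \<and> RH_inf_mat Minv)"

text \<open>Blocks of a subsystem G with inputs (v,d,u) of sizes (nv,nd,nu) and outputs
  (w,z,y) of sizes (nw,nz,ny).\<close>
definition G_yv :: "nat \<Rightarrow> nat \<Rightarrow> nat \<Rightarrow> nat \<Rightarrow> tf mat \<Rightarrow> tf mat" where
  "G_yv nw nz ny nv G = mat ny nv (\<lambda>(i, j). G $$ (nw + nz + i, j))"

definition G_yu :: "nat \<Rightarrow> nat \<Rightarrow> nat \<Rightarrow> nat \<Rightarrow> nat \<Rightarrow> nat \<Rightarrow> tf mat \<Rightarrow> tf mat" where
  "G_yu nw nz ny nv nd nu G = mat ny nu (\<lambda>(i, j). G $$ (nw + nz + i, nv + nd + j))"

definition G_yvv :: "nat \<Rightarrow> nat \<Rightarrow> nat \<Rightarrow> nat \<Rightarrow> tf mat \<Rightarrow> tf mat" where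
  "G_yvv nw nz ny nv G = mat (ny + nv) nv
     (\<lambda>(i, j). if i < ny then G_yv nw nz ny nv G $$ (i, j) else (if i - ny = j then 1 else 0))"

definition G_yvu :: "nat \<Rightarrow> nat \<Rightarrow> nat \<Rightarrow> nat \<Rightarrow> nat \<Rightarrow> nat \<Rightarrow> tf mat \<Rightarrow> tf mat" where
  "G_yvu nw nz ny nv nd nu G = mat (ny + nv) nu
     (\<lambda>(i, j). if i < ny then G_yu nw nz ny nv nd nu G $$ (i, j) else 0)"

definition output_rectifying_retrofit ::
    "nat \<Rightarrow> nat \<Rightarrow> nat \<Rightarrow> nat \<Rightarrow> nat \<Rightarrow> nat \<Rightarrow> tf mat \<Rightarrow> tf mat \<Rightarrow> bool" where
  "output_rectifying_retrofit nw nz ny nv nd nu G K \<longleftrightarrow>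
     (\<exists>Q \<in> carrier_mat nu (ny + nv). RH_inf_mat Q \<and>
        Q * G_yvv nw nz ny nv G = 0\<^sub>m nu nv \<and>
        (\<exists>Minv. is_inverse_mat (1\<^sub>m nu + Q * G_yvu nw nz ny nv nd nu G) Minv \<and>
               K = Minv * Q))"

definition rectifier :: "nat \<Rightarrow> nat \<Rightarrow> nat \<Rightarrow> nat \<Rightarrow> tf mat \<Rightarrow> tf mat" where
  "rectifier nw nz ny nv G = mat ny (ny + nv)
     (\<lambda>(i, j). if j < ny then (if i = j then 1 else 0) else - (G_yv nw nz ny nv G $$ (i, j - ny)))"

end

theory Submission
  imports Defs
begin

lemma mpr_add: "map_poly (complex_of_real) (p+q) = map_poly of_real p + map_poly of_real q"
  by (intro poly_eqI) (simp add: coeff_map_poly)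

lemma mpr_mult: "map_poly (complex_of_real) (p*q) = map_poly of_real p * map_poly of_real q"
proof (induction p)
  case 0 then show ?case by simp
next
  case (pCons a p)
  show ?case using pCons.IH
    by (simp add: mpr_add map_poly_smult map_poly_pCons mult_pCons_left)
qed

lemma RH_inf_0: "RH_inf 0"
  unfolding RH_inf_def by (rule exI[of _ 0], rule exI[of _ 1]) (simp add: Zero_fract_def)

lemma RH_inf_1: "RH_inf 1"
  unfolding RH_inf_def by (rule exI[of _ 1], rule exI[of _ 1]) (simp add: One_fract_def)

lemma RH_inf_uminus: "RH_inf x \<Longrightarrow> RH_inf (- x)"
  unfolding RH_inf_def by (metis degree_minus minus_fract)

lemma RH_inf_mult: assumes "RH_inf x" "RH_inf y" shows "RH_inf (x * y)"
proof -
  obtain p q where a: "q \<noteq> 0" "x = Fract p q" "degree p \<le> degree q"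
    "\<forall>z::complex. poly (map_poly complex_of_real q) z = 0 \<longrightarrow> Re z < 0"
    using assms(1) unfolding RH_inf_def by blast
  obtain p' q' where b: "q' \<noteq> 0" "y = Fract p' q'" "degree p' \<le> degree q'"
    "\<forall>z::complex. poly (map_poly complex_of_real q') z = 0 \<longrightarrow> Re z < 0"
    using assms(2) unfolding RH_inf_def by blast
  have "degree (p * p') \<le> degree (q * q')"
    using a b degree_mult_le[of p p'] by (simp add: degree_mult_eq)
  then show ?thesis unfolding RH_inf_def
    using a b by (intro exI[of _ "p*p'"] exI[of _ "q*q'"]) (auto simp: mpr_mult)
qed

lemma RH_inf_add: assumes "RH_inf x" "RH_inf y" shows "RH_inf (x + y)"
proof -
  obtain p q where a: "q \<noteq> 0" "x = Fract p q" "degree p \<le> degree q"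
    "\<forall>z::complex. poly (map_poly complex_of_real q) z = 0 \<longrightarrow> Re z < 0"
    using assms(1) unfolding RH_inf_def by blast
  obtain p' q' where b: "q' \<noteq> 0" "y = Fract p' q'" "degree p' \<le> degree q'"
    "\<forall>z::complex. poly (map_poly complex_of_real q') z = 0 \<longrightarrow> Re z < 0"
    using assms(2) unfolding RH_inf_def by blast
  have d: "degree (q * q') = degree q + degree q'" using a b by (simp add: degree_mult_eq)
  have "degree (p * q' + p' * q) \<le> degree (q * q')"
    unfolding d
    by (rule degree_add_le) (use a b degree_mult_le[of p q'] degree_mult_le[of p' q] in linarith)+
  then show ?thesis unfolding RH_inf_def
    using a b by (intro exI[of _ "p*q'+p'*q"] exI[of _ "q*q'"]) (auto simp: mpr_mult)
qed

lemma RH_inf_sum: "(\<And>i. i \<in> S \<Longrightarrow> RH_inf (f i)) \<Longrightarrow> RH_inf (sum f S)"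
  by (induction S rule: infinite_finite_induct) (auto simp: RH_inf_0 RH_inf_add)

definition Esel :: "nat \<Rightarrow> nat \<Rightarrow> tf mat" where
  "Esel ny nv = mat (ny+nv) ny (\<lambda>(i,j). if i = j then 1 else 0)"
definition Fsel :: "nat \<Rightarrow> nat \<Rightarrow> tf mat" where
  "Fsel ny nv = mat nv (ny+nv) (\<lambda>(i,j). if j = ny + i then 1 else 0)"

lemma sum_delta_l: "(k::nat) < n \<Longrightarrow> (\<Sum>x\<in>{0..<n}. (if k = x then 1 else 0) * (f x::tf)) = f k"
  by (simp add: if_distrib[of "\<lambda>a. a * _"] cong: if_cong)
lemma sum_delta_r: "(k::nat) < n \<Longrightarrow> (\<Sum>x\<in>{0..<n}. (f x::tf) * (if x = k then 1 else 0)) = f k"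
  by (simp add: if_distrib[of "\<lambda>a. _ * a"] cong: if_cong)

lemma GyvuE: "G_yvu nw nz ny nv nd nu G = Esel ny nv * G_yu nw nz ny nv nd nu G"
  by (rule eq_matI) (auto simp: G_yvu_def Esel_def G_yu_def scalar_prod_def sum_delta_l)

lemma RE: "rectifier nw nz ny nv G * Esel ny nv = 1\<^sub>m ny"
proof (rule eq_matI)
  fix i j assume ij: "i < dim_row (1\<^sub>m ny :: tf mat)" "j < dim_col (1\<^sub>m ny :: tf mat)"
  have "(rectifier nw nz ny nv G * Esel ny nv) $$ (i,j) =
     (\<Sum>x\<in>{0..<ny+nv}. rectifier nw nz ny nv G $$ (i,x) * (if x = j then 1 else 0))"
    using ij by (auto simp: Esel_def rectifier_def scalar_prod_def intro!: sum.cong)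
  also have "\<dots> = rectifier nw nz ny nv G $$ (i,j)" using ij by (intro sum_delta_r) auto
  finally show "(rectifier nw nz ny nv G * Esel ny nv) $$ (i,j) = 1\<^sub>m ny $$ (i,j)"
    using ij by (auto simp: rectifier_def)
qed (auto simp: rectifier_def Esel_def)

lemma sum_split_add: "sum (f::nat\<Rightarrow>tf) {0..<a+b} = sum f {0..<a} + sum (\<lambda>k. f (a+k)) {0..<b}"
  by (induction b) (auto simp: add.assoc)

lemma RGyvv: "rectifier nw nz ny nv G * G_yvv nw nz ny nv G = 0\<^sub>m ny nv"
proof (rule eq_matI)
  fix i j assume ij: "i < dim_row (0\<^sub>m ny nv :: tf mat)" "j < dim_col (0\<^sub>m ny nv :: tf mat)"
  let ?V = "G_yv nw nz ny nv G"
  have "(rectifier nw nz ny nv G * G_yvv nw nz ny nv G) $$ (i,j) =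
     (\<Sum>x\<in>{0..<ny+nv}. rectifier nw nz ny nv G $$ (i,x) * G_yvv nw nz ny nv G $$ (x,j))"
    using ij by (auto simp: G_yvv_def rectifier_def scalar_prod_def intro!: sum.cong)
  also have "\<dots> = (\<Sum>x\<in>{0..<ny}. (if i = x then 1 else 0) * ?V $$ (x,j))
       + (\<Sum>x\<in>{0..<nv}. (- ?V $$ (i,x)) * (if x = j then 1 else 0))"
    unfolding sum_split_add using ij by (auto simp: G_yvv_def rectifier_def intro!: sum.cong arg_cong2[where f="(+)"])
  also have "\<dots> = 0" using ij by (simp add: sum_delta_l sum_delta_r sum_negf del: mult_minus_left)
  finally show "(rectifier nw nz ny nv G * G_yvv nw nz ny nv G) $$ (i,j) = 0\<^sub>m ny nv $$ (i,j)"
    using ij by auto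
qed (auto simp: rectifier_def G_yvv_def)

lemma ER_plus: "Esel ny nv * rectifier nw nz ny nv G + G_yvv nw nz ny nv G * Fsel ny nv = 1\<^sub>m (ny+nv)"
proof (rule eq_matI)
  fix i j assume ij: "i < dim_row (1\<^sub>m (ny+nv) :: tf mat)" "j < dim_col (1\<^sub>m (ny+nv) :: tf mat)"
  let ?V = "G_yv nw nz ny nv G"
  have 1: "(Esel ny nv * rectifier nw nz ny nv G) $$ (i,j) = (if i < ny then rectifier nw nz ny nv G $$ (i,j) else 0)"
  proof -
    have "(Esel ny nv * rectifier nw nz ny nv G) $$ (i,j) = (\<Sum>x\<in>{0..<ny}. (if i = x then 1 else 0) * rectifier nw nz ny nv G $$ (x,j))"
      using ij by (auto simp: Esel_def rectifier_def scalar_prod_def intro!: sum.cong)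
    then show ?thesis by (simp add: sum_delta_l)
  qed
  have 2: "(G_yvv nw nz ny nv G * Fsel ny nv) $$ (i,j) = (if ny \<le> j then G_yvv nw nz ny nv G $$ (i,j - ny) else 0)"
  proof -
    have "(G_yvv nw nz ny nv G * Fsel ny nv) $$ (i,j) = (\<Sum>x\<in>{0..<nv}. G_yvv nw nz ny nv G $$ (i,x) * (if x = j - ny \<and> ny \<le> j then 1 else 0))"
      using ij by (auto simp: Fsel_def G_yvv_def scalar_prod_def intro!: sum.cong)
    then show ?thesis using ij by (cases "ny \<le> j") (auto simp: sum_delta_r)
  qed
  show "(Esel ny nv * rectifier nw nz ny nv G + G_yvv nw nz ny nv G * Fsel ny nv) $$ (i,j) = 1\<^sub>m (ny+nv) $$ (i,j)"
    using ij apply (subst index_add_mat)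
    apply (auto simp: Fsel_def)[2]
    unfolding 1 2 by (auto simp: rectifier_def G_yvv_def)
qed (auto simp: Esel_def Fsel_def G_yvv_def)

lemma four_block_eqD:
  assumes c: "A \<in> carrier_mat n1 m1" "A' \<in> carrier_mat n1 m1" "B \<in> carrier_mat n1 m2" "B' \<in> carrier_mat n1 m2"
    "C \<in> carrier_mat n2 m1" "C' \<in> carrier_mat n2 m1" "D \<in> carrier_mat n2 m2" "D' \<in> carrier_mat n2 m2"
    and e: "four_block_mat A B C D = four_block_mat A' B' C' D'"
  shows "A = A'" "B = B'" "C = C'" "D = D'"
proof -
  have x: "four_block_mat A B C D $$ (i,j) = four_block_mat A' B' C' D' $$ (i,j)" for i j using e by simp
  show "A = A'"
  proof (rule eq_matI)
    fix i j assume "i < dim_row A'" "j < dim_col A'"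
    then show "A $$ (i,j) = A' $$ (i,j)" using x[of i j] c by auto
  qed (use c in auto)
  show "B = B'"
  proof (rule eq_matI)
    fix i j assume "i < dim_row B'" "j < dim_col B'"
    then show "B $$ (i,j) = B' $$ (i,j)" using x[of i "j + m1"] c by auto
  qed (use c in auto)
  show "C = C'"
  proof (rule eq_matI)
    fix i j assume "i < dim_row C'" "j < dim_col C'"
    then show "C $$ (i,j) = C' $$ (i,j)" using x[of "i + n1" j] c by auto
  qed (use c in auto)
  show "D = D'"
  proof (rule eq_matI)
    fix i j assume "i < dim_row D'" "j < dim_col D'"
    then show "D $$ (i,j) = D' $$ (i,j)" using x[of "i + n1" "j + m1"] c by auto
  qed (use c in auto)
qed

lemma RH_mat_mult: "RH_inf_mat A \<Longrightarrow> RH_inf_mat B \<Longrightarrow> dim_col A = dim_row B \<Longrightarrow> RH_inf_mat (A * B)"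
  unfolding RH_inf_mat_def
  by (auto simp: scalar_prod_def intro!: RH_inf_sum RH_inf_mult)

lemma RH_mat_add: "RH_inf_mat A \<Longrightarrow> RH_inf_mat B \<Longrightarrow> dim_row A = dim_row B \<Longrightarrow> dim_col A = dim_col B \<Longrightarrow> RH_inf_mat (A + B)"
  unfolding RH_inf_mat_def by (auto intro!: RH_inf_add)

lemma RH_mat_uminus: "RH_inf_mat A \<Longrightarrow> RH_inf_mat (- A)"
  unfolding RH_inf_mat_def by (auto intro!: RH_inf_uminus)

lemma RH_mat_one: "RH_inf_mat (1\<^sub>m n)"
  unfolding RH_inf_mat_def by (auto simp: RH_inf_0 RH_inf_1)

lemma RH_mat_four_block: "RH_inf_mat A \<Longrightarrow> RH_inf_mat B \<Longrightarrow> RH_inf_mat C \<Longrightarrow> RH_inf_mat D \<Longrightarrow>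
  A \<in> carrier_mat n1 m1 \<Longrightarrow> B \<in> carrier_mat n1 m2 \<Longrightarrow> C \<in> carrier_mat n2 m1 \<Longrightarrow> D \<in> carrier_mat n2 m2 \<Longrightarrow>
  RH_inf_mat (four_block_mat A B C D)"
  unfolding RH_inf_mat_def by auto

lemma RH_mat_split: assumes "RH_inf_mat N" "split_block N a b = (N1,N2,N3,N4)" "N \<in> carrier_mat (a+c) (b+d)"
  shows "RH_inf_mat N2"
  using assms unfolding RH_inf_mat_def split_block_def Let_def by auto

lemma RH_mat_rect: assumes "G \<in> carrier_mat (nw + nz + ny) (nv + nd + nu)" "RH_inf_mat G"
  shows "RH_inf_mat (rectifier nw nz ny nv G)" "RH_inf_mat (G_yu nw nz ny nv nd nu G)"
  using assms unfolding RH_inf_mat_def rectifier_def G_yv_def G_yu_def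
  by (auto simp: RH_inf_0 RH_inf_1 intro!: RH_inf_uminus)

lemma F1: "(X::tf mat) \<in> carrier_mat n m \<Longrightarrow> Y \<in> carrier_mat n m \<Longrightarrow> X + Y = Z \<Longrightarrow> Z + - X = Y"
  by (hypsubst, intro eq_matI) auto
lemma F2: "(X::tf mat) \<in> carrier_mat n m \<Longrightarrow> Y \<in> carrier_mat n m \<Longrightarrow> - X + (Y + X) = Y"
  by (intro eq_matI) auto
lemma F3: "(X::tf mat) \<in> carrier_mat n m \<Longrightarrow> Y \<in> carrier_mat n m \<Longrightarrow> (Y + X) + - X = Y"
  by (intro eq_matI) auto
lemma F4: assumes "(X::tf mat) \<in> carrier_mat n m" "Y \<in> carrier_mat n m" "- X + Y = 0\<^sub>m n m" shows "Y = X"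
proof -
  have "Y = (- X + Y) + X" using assms(1,2) by (intro eq_matI) auto
  then show ?thesis using assms by simp
qed
lemma F5: assumes "(X::tf mat) \<in> carrier_mat n m" "Y \<in> carrier_mat n m" "Y + - X = Z" shows "Y = Z + X"
proof -
  have "Y = (Y + - X) + X" using assms(1,2) by (intro eq_matI) auto
  then show ?thesis using assms by simp
qed

lemma dir1:
  fixes G K :: "tf mat" and nw nz ny nv nd nu :: nat
  assumes G: "G \<in> carrier_mat (nw + nz + ny) (nv + nd + nu)"
    and GRH: "RH_inf_mat G"
    and Kc: "K \<in> carrier_mat nu (ny + nv)"
    and ret: "output_rectifying_retrofit nw nz ny nv nd nu G K"
  shows "\<exists>Kh. stabilizing_controller ny nu (G_yu nw nz ny nv nd nu G) Kh \<and>
          K = Kh * rectifier nw nz ny nv G"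
proof -
  define H where "H = G_yu nw nz ny nv nd nu G"
  define R where "R = rectifier nw nz ny nv G"
  define E where "E = Esel ny nv"
  define GV where "GV = G_yvv nw nz ny nv G"
  define F where "F = Fsel ny nv"
  have Hc: "H \<in> carrier_mat ny nu" by (simp add: H_def G_yu_def)
  have Rc: "R \<in> carrier_mat ny (ny+nv)" by (simp add: R_def rectifier_def)
  have Ec: "E \<in> carrier_mat (ny+nv) ny" by (simp add: E_def Esel_def)
  have GVc: "GV \<in> carrier_mat (ny+nv) nv" by (simp add: GV_def G_yvv_def)
  have Fc: "F \<in> carrier_mat nv (ny+nv)" by (simp add: F_def Fsel_def)
  obtain Q Minv where Qc: "Q \<in> carrier_mat nu (ny + nv)" and QRH: "RH_inf_mat Q"
    and QG: "Q * GV = 0\<^sub>m nu nv"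
    and inv: "is_inverse_mat (1\<^sub>m nu + Q * G_yvu nw nz ny nv nd nu G) Minv" and KM: "K = Minv * Q"
    using ret unfolding output_rectifying_retrofit_def GV_def by blast
  define Q1 where "Q1 = Q * E"
  have Q1c: "Q1 \<in> carrier_mat nu ny" using Qc Ec by (simp add: Q1_def)
  have "Q = Q * 1\<^sub>m (ny+nv)" using Qc by simp
  also have "\<dots> = Q * (E * R + GV * F)" using ER_plus unfolding E_def R_def GV_def F_def by simp
  also have "\<dots> = Q * (E * R) + Q * (GV * F)"
    by (rule mult_add_distrib_mat[OF Qc]) (use Ec Rc GVc Fc in auto)
  also have "\<dots> = Q1 * R + (Q * GV) * F"
    using Qc Ec Rc GVc Fc by (simp add: Q1_def)
  also have "\<dots> = Q1 * R" using QG Fc Q1c Rc by simp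
  finally have QR: "Q = Q1 * R" .
  define P where "P = 1\<^sub>m nu + Q1 * H"
  have Pc: "P \<in> carrier_mat nu nu" using Q1c Hc by (simp add: P_def)
  have "Q * G_yvu nw nz ny nv nd nu G = Q1 * H"
    unfolding GyvuE Q1_def using Qc Ec Hc by (simp add: E_def H_def)
  then have inv': "is_inverse_mat P Minv" using inv by (simp add: P_def)
  then have PM0: "P * Minv = 1\<^sub>m (dim_row P)" and MP0: "Minv * P = 1\<^sub>m (dim_row Minv)"
    unfolding is_inverse_mat_def inverts_mat_def by auto
  have PM: "P * Minv = 1\<^sub>m nu" using PM0 Pc by simp
  have d1: "dim_col Minv = nu" using arg_cong[OF PM, of dim_col] by simp
  have d2: "dim_row Minv = nu" using arg_cong[OF MP0, of dim_col] Pc by simp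
  have Mc: "Minv \<in> carrier_mat nu nu" unfolding carrier_mat_def using d1 d2 by blast
  have MP: "Minv * P = 1\<^sub>m nu" using MP0 unfolding d2 .
  define Kh where "Kh = Minv * Q1"
  have Khc: "Kh \<in> carrier_mat nu ny" using Mc Q1c by (simp add: Kh_def)
  have KK: "K = Kh * R" using KM QR Mc Q1c Rc by (simp add: Kh_def)
  have Q1RH: "RH_inf_mat Q1" unfolding Q1_def
    by (rule RH_mat_mult[OF QRH]) (auto simp: RH_inf_mat_def E_def Esel_def RH_inf_0 RH_inf_1 carrier_matD[OF Qc])
  have HRH: "RH_inf_mat H" using RH_mat_rect[OF G GRH] by (simp add: H_def)
  have a: "Kh * H + Minv = 1\<^sub>m nu"
  proof -
    have "1\<^sub>m nu = Minv * P" using MP by simp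
    also have "\<dots> = Minv * 1\<^sub>m nu + Minv * (Q1 * H)" unfolding P_def
      by (rule mult_add_distrib_mat[OF Mc]) (use Q1c Hc in auto)
    also have "\<dots> = Kh * H + Minv" using Mc Q1c Hc Khc
      by (simp add: Kh_def comm_add_mat[of "Minv" nu nu])
    finally show ?thesis by simp
  qed
  have b: "Kh * (H * P) + 1\<^sub>m nu = P"
  proof -
    have "P = (Kh * H + Minv) * P" using a Pc by simp
    also have "\<dots> = (Kh * H) * P + Minv * P"
      by (rule add_mult_distrib_mat) (use Khc Hc Mc Pc in auto)
    also have "\<dots> = Kh * (H * P) + 1\<^sub>m nu" using MP Khc Hc Pc by simp
    finally show ?thesis by simp
  qed
  have Q1P: "Q1 * (1\<^sub>m ny + H * Q1) = P * Q1"
  proof -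
    have "Q1 * (1\<^sub>m ny + H * Q1) = Q1 * 1\<^sub>m ny + Q1 * (H * Q1)"
      by (rule mult_add_distrib_mat) (use Q1c Hc in auto)
    also have "\<dots> = 1\<^sub>m nu * Q1 + (Q1 * H) * Q1" using Q1c Hc by simp
    also have "\<dots> = P * Q1" unfolding P_def
      by (rule add_mult_distrib_mat[symmetric]) (use Q1c Hc in auto)
    finally show ?thesis .
  qed
  have c: "Kh * (1\<^sub>m ny + H * Q1) = Q1"
  proof -
    have "Kh * (1\<^sub>m ny + H * Q1) = Minv * (Q1 * (1\<^sub>m ny + H * Q1))"
      unfolding Kh_def by (rule assoc_mult_mat) (use Mc Q1c Hc in auto)
    also have "\<dots> = (Minv * P) * Q1" unfolding Q1P using Mc Pc Q1c by simp
    also have "\<dots> = Q1" unfolding MP using carrier_matD[OF Q1c] by simp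
    finally show ?thesis .
  qed
  have PKh: "P * Kh = Q1"
  proof -
    have "P * Kh = (P * Minv) * Q1" unfolding Kh_def
      by (rule assoc_mult_mat[symmetric]) (use Pc Mc Q1c in auto)
    also have "\<dots> = Q1" unfolding PM using carrier_matD[OF Q1c] by simp
    finally show ?thesis .
  qed
  have HP: "(1\<^sub>m ny + H * Q1) * H = H * P"
  proof -
    have "(1\<^sub>m ny + H * Q1) * H = 1\<^sub>m ny * H + (H * Q1) * H"
      by (rule add_mult_distrib_mat) (use Q1c Hc in auto)
    also have "\<dots> = H * 1\<^sub>m nu + H * (Q1 * H)" using Q1c Hc by simp
    also have "\<dots> = H * P" unfolding P_def
      by (rule mult_add_distrib_mat[symmetric]) (use Q1c Hc in auto)
    finally show ?thesis .
  qed
  define M where "M = four_block_mat (1\<^sub>m nu) (- Kh) (- H) (1\<^sub>m ny)"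
  define N where "N = four_block_mat P Q1 (H * P) (1\<^sub>m ny + H * Q1)"
  have HPc: "H * P \<in> carrier_mat ny nu" using Hc Pc by simp
  have D2c: "1\<^sub>m ny + H * Q1 \<in> carrier_mat ny ny" using Hc Q1c by simp
  have HQc: "H * Q1 \<in> carrier_mat ny ny" using Hc Q1c by simp
  note dims = carrier_matD[OF Khc] carrier_matD[OF Hc] carrier_matD[OF Pc] carrier_matD[OF Q1c] carrier_matD[OF Mc]
  have MN: "M * N = 1\<^sub>m (nu + ny)"
  proof -
    have "M * N = four_block_mat (1\<^sub>m nu * P + - Kh * (H * P)) (1\<^sub>m nu * Q1 + - Kh * (1\<^sub>m ny + H * Q1))
       (- H * P + 1\<^sub>m ny * (H * P)) (- H * Q1 + 1\<^sub>m ny * (1\<^sub>m ny + H * Q1))"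
      unfolding M_def N_def
      by (rule mult_four_block_mat) (use Khc Hc Pc Q1c HPc D2c in auto)
    also have "\<dots> = four_block_mat (1\<^sub>m nu) (0\<^sub>m nu ny) (0\<^sub>m ny nu) (1\<^sub>m ny)"
    proof (rule cong_four_block_mat)
      show "1\<^sub>m nu * P + - Kh * (H * P) = 1\<^sub>m nu"
        using F1[OF _ _ b, of nu nu] Khc HPc Pc by (simp add: dims)
      show "1\<^sub>m nu * Q1 + - Kh * (1\<^sub>m ny + H * Q1) = 0\<^sub>m nu ny"
        using c Q1c by (simp add: dims add_uminus_minus_mat[OF Q1c Q1c])
      show "- H * P + 1\<^sub>m ny * (H * P) = 0\<^sub>m ny nu" using HPc by (simp add: dims)
      show "- H * Q1 + 1\<^sub>m ny * (1\<^sub>m ny + H * Q1) = 1\<^sub>m ny"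
        using F2[OF HQc, of "1\<^sub>m ny"] D2c by (simp add: dims)
    qed
    finally show ?thesis by simp
  qed
  have NM: "N * M = 1\<^sub>m (nu + ny)"
  proof -
    have "N * M = four_block_mat (P * 1\<^sub>m nu + Q1 * - H) (P * - Kh + Q1 * 1\<^sub>m ny)
       (H * P * 1\<^sub>m nu + (1\<^sub>m ny + H * Q1) * - H) (H * P * - Kh + (1\<^sub>m ny + H * Q1) * 1\<^sub>m ny)"
      unfolding M_def N_def
      by (rule mult_four_block_mat) (use Khc Hc Pc Q1c HPc D2c in auto)
    also have "\<dots> = four_block_mat (1\<^sub>m nu) (0\<^sub>m nu ny) (0\<^sub>m ny nu) (1\<^sub>m ny)"
    proof (rule cong_four_block_mat)
      show "P * 1\<^sub>m nu + Q1 * - H = 1\<^sub>m nu"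
        using F3[of "Q1 * H" nu nu "1\<^sub>m nu"] Pc Q1c Hc by (simp add: P_def dims)
      show "P * - Kh + Q1 * 1\<^sub>m ny = 0\<^sub>m nu ny" using PKh Q1c by (simp add: dims)
      show "H * P * 1\<^sub>m nu + (1\<^sub>m ny + H * Q1) * - H = 0\<^sub>m ny nu"
        using HP HPc by (simp add: dims add_uminus_minus_mat[OF HPc HPc])
      have "H * P * - Kh = - (H * Q1)" using PKh Hc Pc Khc by (simp add: dims)
      then show "H * P * - Kh + (1\<^sub>m ny + H * Q1) * 1\<^sub>m ny = 1\<^sub>m ny"
        using F2[OF HQc, of "1\<^sub>m ny"] D2c by (simp add: dims)
    qed
    finally show ?thesis by simp
  qed
  have NRH: "RH_inf_mat N" unfolding N_def
  proof (rule RH_mat_four_block[OF _ _ _ _ Pc Q1c HPc D2c])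
    show "RH_inf_mat P" unfolding P_def
      by (rule RH_mat_add) (use RH_mat_one Q1c Hc RH_mat_mult[OF Q1RH HRH] in auto)
    show "RH_inf_mat Q1" by fact
    show "RH_inf_mat (H * P)"
      by (rule RH_mat_mult[OF HRH]) (use Hc Pc \<open>RH_inf_mat P\<close> in auto)
    show "RH_inf_mat (1\<^sub>m ny + H * Q1)"
      by (rule RH_mat_add) (use RH_mat_one Q1c Hc RH_mat_mult[OF HRH Q1RH] in auto)
  qed
  have "stabilizing_controller ny nu H Kh"
    unfolding stabilizing_controller_def
  proof (intro conjI exI)
    show "is_inverse_mat (four_block_mat (1\<^sub>m nu) (- Kh) (- H) (1\<^sub>m ny)) N"
      using MN NM unfolding is_inverse_mat_def inverts_mat_def M_def N_def
      by (simp add: P_def dims)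
  qed (use Hc Khc NRH in auto)
  then show ?thesis using KK by (auto simp: H_def R_def)
qed

lemma dir2:
  fixes G K :: "tf mat" and nw nz ny nv nd nu :: nat
  assumes G: "G \<in> carrier_mat (nw + nz + ny) (nv + nd + nu)"
    and GRH: "RH_inf_mat G"
    and Kc: "K \<in> carrier_mat nu (ny + nv)"
    and stab: "stabilizing_controller ny nu (G_yu nw nz ny nv nd nu G) Kh"
    and KK: "K = Kh * rectifier nw nz ny nv G"
  shows "output_rectifying_retrofit nw nz ny nv nd nu G K"
proof -
  define H where "H = G_yu nw nz ny nv nd nu G"
  define R where "R = rectifier nw nz ny nv G"
  define E where "E = Esel ny nv"
  define GV where "GV = G_yvv nw nz ny nv G"
  have Hc: "H \<in> carrier_mat ny nu" by (simp add: H_def G_yu_def)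
  have Rc: "R \<in> carrier_mat ny (ny+nv)" by (simp add: R_def rectifier_def)
  have Ec: "E \<in> carrier_mat (ny+nv) ny" by (simp add: E_def Esel_def)
  have GVc: "GV \<in> carrier_mat (ny+nv) nv" by (simp add: GV_def G_yvv_def)
  have HRH: "RH_inf_mat H" using RH_mat_rect[OF G GRH] by (simp add: H_def)
  have RRH: "RH_inf_mat R" using RH_mat_rect[OF G GRH] by (simp add: R_def)
  define M where "M = four_block_mat (1\<^sub>m nu) (- Kh) (- H) (1\<^sub>m ny)"
  obtain N where Khc: "Kh \<in> carrier_mat nu ny" and inv: "is_inverse_mat M N" and NRH: "RH_inf_mat N"
    using stab unfolding stabilizing_controller_def M_def H_def by blast
  have Mc: "M \<in> carrier_mat (nu+ny) (nu+ny)" unfolding M_def using Khc Hc by simp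
  have MN0: "M * N = 1\<^sub>m (dim_row M)" and NM0: "N * M = 1\<^sub>m (dim_row N)"
    using inv unfolding is_inverse_mat_def inverts_mat_def by auto
  have MN: "M * N = 1\<^sub>m (nu+ny)" using MN0 carrier_matD[OF Mc] by simp
  have d1: "dim_col N = nu + ny" using arg_cong[OF MN, of dim_col] by simp
  have d2: "dim_row N = nu + ny" using arg_cong[OF NM0, of dim_col] carrier_matD[OF Mc] by simp
  have NM: "N * M = 1\<^sub>m (nu+ny)" using NM0 unfolding d2 .
  obtain N11 N12 N21 N22 where sb: "split_block N nu nu = (N11, N12, N21, N22)"
    by (metis prod_cases4)
  note spl = split_block[OF sb d2 d1]
  have N11c: "N11 \<in> carrier_mat nu nu" and N12c: "N12 \<in> carrier_mat nu ny"
    and N21c: "N21 \<in> carrier_mat ny nu" and N22c: "N22 \<in> carrier_mat ny ny" and Neq: "N = four_block_mat N11 N12 N21 N22"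
    using spl by auto
  have N12RH: "RH_inf_mat N12" using RH_mat_split[OF NRH sb, of ny ny] d1 d2 carrier_matI[of N "nu+ny" "nu+ny"] by blast
  note dims = carrier_matD[OF Khc] carrier_matD[OF Hc] carrier_matD[OF N11c] carrier_matD[OF N12c]
    carrier_matD[OF N21c] carrier_matD[OF N22c]
  have "M * N = four_block_mat (1\<^sub>m nu * N11 + - Kh * N21) (1\<^sub>m nu * N12 + - Kh * N22)
       (- H * N11 + 1\<^sub>m ny * N21) (- H * N12 + 1\<^sub>m ny * N22)"
    unfolding M_def Neq by (rule mult_four_block_mat) (use Khc Hc N11c N12c N21c N22c in auto)
  then have "four_block_mat (N11 + - (Kh * N21)) (N12 + - (Kh * N22))
       (- (H * N11) + N21) (- (H * N12) + N22) = four_block_mat (1\<^sub>m nu) (0\<^sub>m nu ny) (0\<^sub>m ny nu) (1\<^sub>m ny)"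
    using MN by (simp add: dims)
  note FB = this
  have e1: "N11 + - (Kh * N21) = 1\<^sub>m nu"
    by (rule four_block_eqD(1)[OF _ _ _ _ _ _ _ _ FB]) (use Khc Hc N11c N12c N21c N22c in auto)
  have e3: "- (H * N11) + N21 = 0\<^sub>m ny nu"
    by (rule four_block_eqD(3)[OF _ _ _ _ _ _ _ _ FB]) (use Khc Hc N11c N12c N21c N22c in auto)
  have "N * M = four_block_mat (N11 * 1\<^sub>m nu + N12 * - H) (N11 * - Kh + N12 * 1\<^sub>m ny)
       (N21 * 1\<^sub>m nu + N22 * - H) (N21 * - Kh + N22 * 1\<^sub>m ny)"
    unfolding M_def Neq by (rule mult_four_block_mat) (use Khc Hc N11c N12c N21c N22c in auto)
  then have "four_block_mat (N11 + - (N12 * H)) (- (N11 * Kh) + N12)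
       (N21 + - (N22 * H)) (- (N21 * Kh) + N22) = four_block_mat (1\<^sub>m nu) (0\<^sub>m nu ny) (0\<^sub>m ny nu) (1\<^sub>m ny)"
    using NM by (simp add: dims)
  note FB2 = this
  have f1: "N11 + - (N12 * H) = 1\<^sub>m nu"
    by (rule four_block_eqD(1)[OF _ _ _ _ _ _ _ _ FB2]) (use Khc Hc N11c N12c N21c N22c in auto)
  have f2: "- (N11 * Kh) + N12 = 0\<^sub>m nu ny"
    by (rule four_block_eqD(2)[OF _ _ _ _ _ _ _ _ FB2]) (use Khc Hc N11c N12c N21c N22c in auto)
  have N21e: "N21 = H * N11" using F4[OF _ N21c e3] Hc N11c by simp
  have N12e: "N12 = N11 * Kh" using F4[OF _ N12c f2] Khc N11c by simp
  have N11e: "N11 = 1\<^sub>m nu + N12 * H" using F5[OF _ N11c f1] Hc N12c by simp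
  define Minv where "Minv = 1\<^sub>m nu + - (Kh * H)"
  have KHc: "Kh * H \<in> carrier_mat nu nu" using Khc Hc by simp
  have Minvc: "Minv \<in> carrier_mat nu nu" using KHc by (simp add: Minv_def)
  have MN11: "Minv * N11 = 1\<^sub>m nu"
  proof -
    have "Minv * N11 = 1\<^sub>m nu * N11 + - (Kh * H) * N11" unfolding Minv_def
      by (rule add_mult_distrib_mat) (use KHc N11c in auto)
    also have "\<dots> = N11 + - (Kh * N21)" unfolding N21e using Khc Hc N11c by (simp add: dims)
    finally show ?thesis using e1 by simp
  qed
  have N11M: "N11 * Minv = 1\<^sub>m nu"
  proof -
    have "N11 * Minv = N11 * 1\<^sub>m nu + N11 * - (Kh * H)" unfolding Minv_def
      by (rule mult_add_distrib_mat) (use KHc N11c in auto)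
    also have "\<dots> = N11 + - (N12 * H)" unfolding N12e using Khc Hc N11c by (simp add: dims)
    finally show ?thesis using f1 by simp
  qed
  have MN12: "Minv * N12 = Kh"
  proof -
    have "Minv * N12 = (Minv * N11) * Kh" unfolding N12e
      by (rule assoc_mult_mat[symmetric]) (use Minvc N11c Khc in auto)
    then show ?thesis using MN11 dims by simp
  qed
  define Q where "Q = N12 * R"
  have Qc: "Q \<in> carrier_mat nu (ny + nv)" using N12c Rc by (simp add: Q_def)
  have QRH: "RH_inf_mat Q" unfolding Q_def by (rule RH_mat_mult[OF N12RH RRH]) (use N12c Rc in auto)
  have QGV: "Q * GV = 0\<^sub>m nu nv"
  proof -
    have "Q * GV = N12 * (R * GV)" unfolding Q_def by (rule assoc_mult_mat) (use N12c Rc GVc in auto)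
    also have "R * GV = 0\<^sub>m ny nv" using RGyvv by (simp add: R_def GV_def)
    finally show ?thesis using carrier_matD[OF N12c] by simp
  qed
  have QG: "Q * G_yvu nw nz ny nv nd nu G = N12 * H"
  proof -
    have "Q * G_yvu nw nz ny nv nd nu G = N12 * R * (E * H)" unfolding GyvuE Q_def by (simp add: E_def H_def)
    also have "\<dots> = N12 * ((R * E) * H)" unfolding assoc_mult_mat[OF Rc Ec Hc] by (rule assoc_mult_mat[OF N12c Rc mult_carrier_mat[OF Ec Hc]])
    also have "R * E = 1\<^sub>m ny" using RE by (simp add: R_def E_def)
    finally show ?thesis using carrier_matD[OF Hc] by simp
  qed
  have "is_inverse_mat (1\<^sub>m nu + Q * G_yvu nw nz ny nv nd nu G) Minv"
    unfolding QG N11e[symmetric] is_inverse_mat_def inverts_mat_def carrier_matD(1)[OF N11c] carrier_matD(1)[OF Minvc]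
    using N11M MN11 by blast
  moreover have "K = Minv * Q" unfolding KK Q_def R_def[symmetric] MN12[symmetric]
    by (rule assoc_mult_mat[OF Minvc N12c Rc])
  ultimately show ?thesis unfolding output_rectifying_retrofit_def
    using Qc QRH QGV by (auto simp: GV_def)
qed


theorem proposition1:
  fixes G K :: "tf mat" and nw nz ny nv nd nu :: nat
  assumes "G \<in> carrier_mat (nw + nz + ny) (nv + nd + nu)"
    and "RH_inf_mat G"
    and "K \<in> carrier_mat nu (ny + nv)"
  shows "output_rectifying_retrofit nw nz ny nv nd nu G K \<longleftrightarrow>
    (\<exists>Kh. stabilizing_controller ny nu (G_yu nw nz ny nv nd nu G) Kh \<and>
          K = Kh * rectifier nw nz ny nv G)"
  using dir1[OF assms] dir2[OF assms] by blast

end
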